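(* For every integer $n\ge0$ and every complex $z$ with $\mathrm{Re}\,z>0$, $$\int_0^\infty e^{-zu}\,\nu^{*(n)}(u)\,du=N_1(z)^n,$$ where for $n=0$ the left-hand side is interpreted as the Laplace transform of the Dirac delta at $0$, namely $1$.
   Context: $\nu(u)=\frac2{\sqrt\pi}\frac{\sqrt u}{2u+1}$ for $u\ge0$; $\nu^{*(0)}$ is the Dirac delta at $0$ and $\nu^{*(n)}$, $n\ge1$, is the $n$-fold convolution $(f*g)(t)=\int_0^tf(s)g(t-s)ds$ of $\nu$ with itself. $\Psi(w)=\int_0^\infty x\exp(-\tfrac12x^2+wx)dx$ for complex $w$, and $N_1(z)=\Psi(-\sqrt z)/\sqrt z$ for $z\in\mathbb C\setminus(-\infty,0]$, with the principal branch of $\sqrt z$. *)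

theory Defs
  imports "HOL-Analysis.Analysis"
begin

definition nu :: "real \<Rightarrow> real" where
  "nu u = (if u \<ge> 0 then 2 / sqrt pi * sqrt u / (2 * u + 1) else 0)"

definition conv0 :: "(real \<Rightarrow> real) \<Rightarrow> (real \<Rightarrow> real) \<Rightarrow> real \<Rightarrow> real" where
  "conv0 f g t = integral {0..t} (\<lambda>s. f s * g (t - s))"

text \<open>n-fold convolution power of nu, for n \<ge> 1: nu_conv_pow 1 = nu,
  nu_conv_pow (n+1) = nu * nu_conv_pow n. (The case n = 0, the Dirac delta,
  is not a function and is treated separately in the statement.)\<close>
fun nu_conv_pow :: "nat \<Rightarrow> real \<Rightarrow> real" where
  "nu_conv_pow 0 = (\<lambda>_. 0)"
| "nu_conv_pow (Suc 0) = nu"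
| "nu_conv_pow (Suc (Suc n)) = conv0 nu (nu_conv_pow (Suc n))"

definition Psi :: "complex \<Rightarrow> complex" where
  "Psi w = integral {0..} (\<lambda>x::real. of_real x * exp (of_real (- (x\<^sup>2) / 2) + w * of_real x))"

definition N1 :: "complex \<Rightarrow> complex" where
  "N1 z = Psi (- csqrt z) / csqrt z"

end

theory Submission
  imports Defs "HOL-Complex_Analysis.Complex_Analysis" "HOL-Real_Asymp.Real_Asymp"
begin

lemma conv0_neg: "t < 0 \<Longrightarrow> conv0 f g t = 0"
  by (simp add: conv0_def)

lemma conv0_eq_enn2real:
  fixes f g :: "real \<Rightarrow> real"
  assumes [measurable]: "f \<in> borel_measurable borel" "g \<in> borel_measurable borel"
    and fnn: "\<And>x. 0 \<le> f x" and gnn: "\<And>x. 0 \<le> g x"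
    and f0: "\<And>x. x < 0 \<Longrightarrow> f x = 0" and g0: "\<And>x. x < 0 \<Longrightarrow> g x = 0"
  shows "conv0 f g t = enn2real (\<integral>\<^sup>+s. ennreal (f s * g (t - s)) \<partial>lborel)"
proof (cases "t < 0")
  case True
  have z: "f s * g (t - s) = 0" for s
    using True f0 g0 by (cases "s < 0") auto
  have "(\<integral>\<^sup>+s. ennreal (f s * g (t - s)) \<partial>lborel) = 0"
    by (simp add: z)
  then show ?thesis using True by (simp add: conv0_neg)
next
  case False
  let ?F = "\<lambda>s. f s * g (t - s)"
  have eq: "?F s = indicator {0..t} s * ?F s" for s
    using False f0 g0 by (cases "s < 0"; cases "t - s < 0") (auto simp: indicator_def)
  have Fnn: "0 \<le> ?F s" for s using fnn gnn by simp
  show ?thesis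
  proof (cases "(\<integral>\<^sup>+s. ennreal (?F s) \<partial>lborel) < \<infinity>")
    case True
    have int: "integrable lborel ?F"
      by (rule integrableI_nonneg) (use True Fnn in auto)
    have sint: "set_integrable lborel {0..t} ?F"
      unfolding set_integrable_def using int by (subst (asm) eq) simp
    have "conv0 f g t = (LINT s:{0..t}|lborel. ?F s)"
      unfolding conv0_def using set_borel_integral_eq_integral(2)[OF sint] by simp
    also have "\<dots> = (\<integral>s. ?F s \<partial>lborel)"
      unfolding set_lebesgue_integral_def by (subst (2) eq) simp
    also have "\<dots> = enn2real (\<integral>\<^sup>+s. ennreal (?F s) \<partial>lborel)"
      by (rule integral_eq_nn_integral) (use Fnn in auto)
    finally show ?thesis .
  next
    case inf: False
    have "\<not> ?F integrable_on {0..t}"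
    proof
      assume "?F integrable_on {0..t}"
      then have "?F absolutely_integrable_on {0..t}"
        by (rule nonnegative_absolutely_integrable_1) (use Fnn in auto)
      then have "integrable lebesgue (\<lambda>s. indicator {0..t} s *\<^sub>R ?F s)"
        unfolding set_integrable_def .
      then have "integrable lborel (\<lambda>s. indicator {0..t} s *\<^sub>R ?F s)"
        by (subst (asm) integrable_completion) auto
      then have "integrable lborel ?F"
        by (subst eq) simp
      then have "(\<integral>\<^sup>+s. ennreal (norm (?F s)) \<partial>lborel) < \<infinity>"
        by (simp add: integrable_iff_bounded)
      with inf Fnn show False by simp
    qed
    then have "conv0 f g t = 0" unfolding conv0_def by (rule not_integrable_integral)
    with inf show ?thesis by (simp add: less_top[symmetric])
  qed
qed

definition LT :: "(real \<Rightarrow> real) \<Rightarrow> complex \<Rightarrow> complex" where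
  "LT \<phi> z = (\<integral>x. exp (- (z * of_real x)) * of_real (\<phi> x) \<partial>lborel)"

definition lap_ok :: "(real \<Rightarrow> real) \<Rightarrow> bool" where
  "lap_ok \<phi> \<longleftrightarrow> \<phi> \<in> borel_measurable borel \<and> (\<forall>x. 0 \<le> \<phi> x) \<and> (\<forall>x<0. \<phi> x = 0) \<and>
     (\<forall>\<sigma>>0. integrable lborel (\<lambda>x. exp (- \<sigma> * x) * \<phi> x))"

lemma lap_ok_nn_finite:
  assumes "lap_ok f" "\<sigma> > 0"
  shows "(\<integral>\<^sup>+x. ennreal (exp (- \<sigma> * x) * f x) \<partial>lborel) < \<infinity>"
proof -
  have "integrable lborel (\<lambda>x. exp (- \<sigma> * x) * f x)" using assms unfolding lap_ok_def by auto
  then have "(\<integral>\<^sup>+x. ennreal (norm (exp (- \<sigma> * x) * f x)) \<partial>lborel) < \<infinity>"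
    by (simp add: integrable_iff_bounded)
  moreover have "norm (exp (- \<sigma> * x) * f x) = exp (- \<sigma> * x) * f x" for x
    using assms unfolding lap_ok_def by (simp add: abs_mult)
  ultimately show ?thesis by simp
qed

lemma nn_shift:
  fixes G :: "real \<Rightarrow> ennreal"
  assumes [measurable]: "G \<in> borel_measurable borel"
  shows "(\<integral>\<^sup>+t. G (t - s) \<partial>lborel) = (\<integral>\<^sup>+x. G x \<partial>lborel)"
  using nn_integral_real_affine[of "\<lambda>t. G (t - s)" 1 s] by simp

lemma int_shift:
  fixes G :: "real \<Rightarrow> 'a::{banach, second_countable_topology}"
  shows "(\<integral>t. G (t - s) \<partial>lborel) = (\<integral>x. G x \<partial>lborel)"
  using lborel_integral_real_affine[of 1 "\<lambda>t. G (t - s)" s] by simp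

lemma conv_tonelli:
  fixes f g :: "real \<Rightarrow> real"
  assumes [measurable]: "f \<in> borel_measurable borel" "g \<in> borel_measurable borel"
    and fnn: "\<And>x. 0 \<le> f x" and gnn: "\<And>x. 0 \<le> g x"
  shows "(\<integral>\<^sup>+t. (\<integral>\<^sup>+s. ennreal (exp (- \<sigma> * t) * (f s * g (t - s))) \<partial>lborel) \<partial>lborel)
     = (\<integral>\<^sup>+s. ennreal (exp (- \<sigma> * s) * f s) \<partial>lborel) * (\<integral>\<^sup>+x. ennreal (exp (- \<sigma> * x) * g x) \<partial>lborel)"
proof -
  have "(\<integral>\<^sup>+t. (\<integral>\<^sup>+s. ennreal (exp (- \<sigma> * t) * (f s * g (t - s))) \<partial>lborel) \<partial>lborel)
     = (\<integral>\<^sup>+s. (\<integral>\<^sup>+t. ennreal (exp (- \<sigma> * t) * (f s * g (t - s))) \<partial>lborel) \<partial>lborel)"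
    by (rule lborel_pair.Fubini') measurable
  also have "\<dots> = (\<integral>\<^sup>+s. ennreal (exp (- \<sigma> * s) * f s) * (\<integral>\<^sup>+x. ennreal (exp (- \<sigma> * x) * g x) \<partial>lborel) \<partial>lborel)"
  proof (rule nn_integral_cong)
    fix s :: real
    have "(\<integral>\<^sup>+t. ennreal (exp (- \<sigma> * t) * (f s * g (t - s))) \<partial>lborel)
        = (\<integral>\<^sup>+t. ennreal (exp (- \<sigma> * s) * f s) * ennreal (exp (- \<sigma> * (t - s)) * g (t - s)) \<partial>lborel)"
    proof (rule nn_integral_cong)
      fix t :: real
      have e: "exp (- \<sigma> * t) * (f s * g (t - s)) = (exp (- \<sigma> * s) * f s) * (exp (- \<sigma> * (t - s)) * g (t - s))"
        by (simp add: algebra_simps flip: exp_add)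
      show "ennreal (exp (- \<sigma> * t) * (f s * g (t - s))) = ennreal (exp (- \<sigma> * s) * f s) * ennreal (exp (- \<sigma> * (t - s)) * g (t - s))"
        by (subst e, rule ennreal_mult') (use fnn in simp)
    qed
    also have "\<dots> = ennreal (exp (- \<sigma> * s) * f s) * (\<integral>\<^sup>+t. ennreal (exp (- \<sigma> * (t - s)) * g (t - s)) \<partial>lborel)"
      by (rule nn_integral_cmult) measurable
    also have "(\<integral>\<^sup>+t. ennreal (exp (- \<sigma> * (t - s)) * g (t - s)) \<partial>lborel) = (\<integral>\<^sup>+x. ennreal (exp (- \<sigma> * x) * g x) \<partial>lborel)"
      by (rule nn_shift[where G="\<lambda>x. ennreal (exp (- \<sigma> * x) * g x)"]) measurable
    finally show "(\<integral>\<^sup>+t. ennreal (exp (- \<sigma> * t) * (f s * g (t - s))) \<partial>lborel) = ennreal (exp (- \<sigma> * s) * f s) * (\<integral>\<^sup>+x. ennreal (exp (- \<sigma> * x) * g x) \<partial>lborel)" .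
  qed
  also have "\<dots> = (\<integral>\<^sup>+s. ennreal (exp (- \<sigma> * s) * f s) \<partial>lborel) * (\<integral>\<^sup>+x. ennreal (exp (- \<sigma> * x) * g x) \<partial>lborel)"
    by (rule nn_integral_multc) measurable
  finally show ?thesis .
qed

lemma conv_main:
  fixes f g :: "real \<Rightarrow> real"
  assumes lf: "lap_ok f" and lg: "lap_ok g"
  shows "lap_ok (conv0 f g)" and "Re z > 0 \<Longrightarrow> LT (conv0 f g) z = LT f z * LT g z"
proof -
  have mf[measurable]: "f \<in> borel_measurable borel" and mg[measurable]: "g \<in> borel_measurable borel"
    using lf lg unfolding lap_ok_def by auto
  have fnn: "\<And>x. 0 \<le> f x" and gnn: "\<And>x. 0 \<le> g x"
    and f0: "\<And>x. x < 0 \<Longrightarrow> f x = 0" and g0: "\<And>x. x < 0 \<Longrightarrow> g x = 0"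
    using lf lg unfolding lap_ok_def by auto
  have CB: "conv0 f g t = (\<integral>s. f s * g (t - s) \<partial>lborel)" for t
    using conv0_eq_enn2real[of f g t] fnn gnn f0 g0
    by (subst integral_eq_nn_integral) auto
  have CBf: "conv0 f g = (\<lambda>t. \<integral>s. f s * g (t - s) \<partial>lborel)"
    by (rule ext) (rule CB)
  have meas[measurable]: "conv0 f g \<in> borel_measurable borel"
    unfolding CBf by measurable
  have cnn: "0 \<le> conv0 f g t" for t
    using conv0_eq_enn2real[of f g t] fnn gnn f0 g0 by simp
  have bound: "(\<integral>\<^sup>+t. ennreal (exp (- \<sigma> * t) * conv0 f g t) \<partial>lborel)
     \<le> (\<integral>\<^sup>+t. (\<integral>\<^sup>+s. ennreal (exp (- \<sigma> * t) * (f s * g (t - s))) \<partial>lborel) \<partial>lborel)" for \<sigma>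
  proof (rule nn_integral_mono)
    fix t :: real
    let ?H = "\<integral>\<^sup>+s. ennreal (f s * g (t - s)) \<partial>lborel"
    have "ennreal (exp (- \<sigma> * t) * conv0 f g t) = ennreal (exp (- \<sigma> * t)) * ennreal (enn2real ?H)"
      using conv0_eq_enn2real[of f g t] fnn gnn f0 g0 by (simp add: ennreal_mult')
    also have "\<dots> \<le> ennreal (exp (- \<sigma> * t)) * ?H"
      by (intro mult_left_mono) (auto simp: ennreal_enn2real_if)
    also have "\<dots> = (\<integral>\<^sup>+s. ennreal (exp (- \<sigma> * t)) * ennreal (f s * g (t - s)) \<partial>lborel)"
      by (rule nn_integral_cmult[symmetric]) measurable
    also have "\<dots> = (\<integral>\<^sup>+s. ennreal (exp (- \<sigma> * t) * (f s * g (t - s))) \<partial>lborel)"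
      by (simp add: ennreal_mult')
    finally show "ennreal (exp (- \<sigma> * t) * conv0 f g t) \<le> (\<integral>\<^sup>+s. ennreal (exp (- \<sigma> * t) * (f s * g (t - s))) \<partial>lborel)" .
  qed
  have fin: "(\<integral>\<^sup>+t. (\<integral>\<^sup>+s. ennreal (exp (- \<sigma> * t) * (f s * g (t - s))) \<partial>lborel) \<partial>lborel) < \<infinity>"
    if "\<sigma> > 0" for \<sigma>
    unfolding conv_tonelli[OF mf mg fnn gnn, where \<sigma>=\<sigma>]
    using lap_ok_nn_finite[OF lf that] lap_ok_nn_finite[OF lg that] by (simp add: ennreal_mult_less_top)
  show lc: "lap_ok (conv0 f g)"
    unfolding lap_ok_def
  proof (intro conjI allI impI)
    fix \<sigma> :: real assume "\<sigma> > 0"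
    show "integrable lborel (\<lambda>x. exp (- \<sigma> * x) * conv0 f g x)"
      by (rule integrableI_nonneg) (use bound[of \<sigma>] fin[OF \<open>\<sigma> > 0\<close>] cnn in \<open>auto intro: le_less_trans\<close>)
  qed (auto simp: cnn conv0_neg)
  assume z: "Re z > 0"
  define G where "G t s = exp (- (z * of_real t)) * of_real (f s * g (t - s))" for t s :: real
  have mG[measurable]: "(\<lambda>(t,s). G t s) \<in> borel_measurable (lborel \<Otimes>\<^sub>M lborel)"
    unfolding G_def by measurable
  have mG2: "(\<lambda>p. ennreal (norm ((\<lambda>(t,s). G t s) p))) \<in> borel_measurable (lborel \<Otimes>\<^sub>M lborel)"
    using mG by measurable
  have nG: "norm (G t s) = exp (- Re z * t) * (f s * g (t - s))" for t s
    unfolding G_def using fnn gnn by (simp add: norm_mult norm_exp_eq_Re abs_mult)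
  have intG: "integrable (lborel \<Otimes>\<^sub>M lborel) (\<lambda>(t,s). G t s)"
  proof (rule integrableI_bounded)
    have "(\<integral>\<^sup>+p. ennreal (norm ((\<lambda>(t,s). G t s) p)) \<partial>(lborel \<Otimes>\<^sub>M lborel))
      = (\<integral>\<^sup>+t. (\<integral>\<^sup>+s. ennreal (norm (G t s)) \<partial>lborel) \<partial>lborel)"
      by (subst lborel.nn_integral_fst[symmetric, OF mG2]) simp
    also have "\<dots> = (\<integral>\<^sup>+t. (\<integral>\<^sup>+s. ennreal (exp (- Re z * t) * (f s * g (t - s))) \<partial>lborel) \<partial>lborel)"
      by (simp add: nG)
    finally show "(\<integral>\<^sup>+p. ennreal (norm ((\<lambda>(t,s). G t s) p)) \<partial>(lborel \<Otimes>\<^sub>M lborel)) < \<infinity>"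
      using fin[OF z] by simp
  qed measurable
  have "LT (conv0 f g) z = (\<integral>t. (\<integral>s. G t s \<partial>lborel) \<partial>lborel)"
    unfolding LT_def G_def CB by (simp del: of_real_mult)
  also have "\<dots> = (\<integral>s. (\<integral>t. G t s \<partial>lborel) \<partial>lborel)"
    using lborel_pair.Fubini_integral[of G] intG by simp
  also have "\<dots> = (\<integral>s. exp (- (z * of_real s)) * of_real (f s) * LT g z \<partial>lborel)"
  proof (rule Bochner_Integration.integral_cong[OF refl])
    fix s :: real
    have "G t s = (exp (- (z * of_real s)) * of_real (f s)) * (exp (- (z * of_real (t - s))) * of_real (g (t - s)))" for t
      unfolding G_def by (simp add: algebra_simps flip: exp_add)
    then have "(\<integral>t. G t s \<partial>lborel) = (exp (- (z * of_real s)) * of_real (f s)) * (\<integral>t. exp (- (z * of_real (t - s))) * of_real (g (t - s)) \<partial>lborel)"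
      by simp
    also have "(\<integral>t. exp (- (z * of_real (t - s))) * of_real (g (t - s)) \<partial>lborel) = LT g z"
      unfolding LT_def by (rule int_shift[where G="\<lambda>x. exp (- (z * of_real x)) * of_real (g x)"])
    finally show "(\<integral>t. G t s \<partial>lborel) = exp (- (z * of_real s)) * of_real (f s) * LT g z" .
  qed
  also have "\<dots> = LT f z * LT g z"
    unfolding LT_def by simp
  finally show "LT (conv0 f g) z = LT f z * LT g z" .
qed


lemma lap_integrable:
  assumes "lap_ok \<phi>" "Re z > 0"
  shows "integrable lborel (\<lambda>x. exp (- (z * of_real x)) * of_real (\<phi> x))"
proof -
  have m[measurable]: "\<phi> \<in> borel_measurable borel" and nn: "\<And>x. 0 \<le> \<phi> x"
    using assms unfolding lap_ok_def by auto
  have i: "integrable lborel (\<lambda>x. exp (- Re z * x) * \<phi> x)"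
    using assms unfolding lap_ok_def by auto
  show ?thesis
    by (rule Bochner_Integration.integrable_bound[OF i]) (auto simp: norm_mult norm_exp_eq_Re nn)
qed

lemma LT_holo:
  assumes ok: "lap_ok \<phi>" and cont: "continuous_on UNIV \<phi>"
  shows "LT \<phi> holomorphic_on {z. 0 < Re z}"
proof -
  have m[measurable]: "\<phi> \<in> borel_measurable borel" and nn: "\<And>x. 0 \<le> \<phi> x"
    and z0: "\<And>x. x < 0 \<Longrightarrow> \<phi> x = 0"
    using ok unfolding lap_ok_def by auto
  define F where "F z x = exp (- (z * of_real x)) * of_real (\<phi> x)" for z :: complex and x :: real
  define fn where "fn n z = integral {0..real n} (F z)" for n :: nat and z
  have contF: "continuous_on A (F z)" for A z
    unfolding F_def by (intro continuous_intros continuous_on_subset[OF cont]) auto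
  have hol: "fn n holomorphic_on {z. 0 < Re z}" for n
  proof -
    have "(\<lambda>z. integral (cbox 0 (real n)) (F z)) holomorphic_on {z. 0 < Re z}"
    proof (rule leibniz_rule_holomorphic[where fx = "\<lambda>z t. - of_real t * exp (- (z * of_real t)) * of_real (\<phi> t)"])
      fix z t assume "z \<in> {z. 0 < Re z}" "t \<in> cbox 0 (real n)"
      show "((\<lambda>z. F z t) has_field_derivative - of_real t * exp (- (z * of_real t)) * of_real (\<phi> t)) (at z within {z. 0 < Re z})"
        unfolding F_def by (auto intro!: derivative_eq_intros)
    next
      fix z show "F z integrable_on cbox 0 (real n)"
        by (rule integrable_continuous) (rule contF)
    next
      show "continuous_on ({z. 0 < Re z} \<times> cbox 0 (real n)) (\<lambda>(z, t). - of_real t * exp (- (z * of_real t)) * of_real (\<phi> t))"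
      proof -
        have c2: "continuous_on UNIV (\<lambda>p::complex\<times>real. \<phi> (snd p))"
          by (rule continuous_on_compose2[OF cont continuous_on_snd]) auto
        show ?thesis unfolding case_prod_beta
          by (intro continuous_intros continuous_on_subset[OF c2]) auto
      qed
    qed (rule convex_halfspace_Re_gt)
    then show ?thesis unfolding fn_def by (simp add: cbox_interval)
  qed
  show ?thesis
  proof (rule holomorphic_uniform_sequence[OF open_halfspace_Re_gt hol])
    fix z :: complex assume z: "z \<in> {z. 0 < Re z}"
    define d where "d = Re z / 2"
    have d: "d > 0" using z by (simp add: d_def)
    have ReW: "Re w \<ge> d" if "w \<in> cball z d" for w
    proof -
      have "\<bar>Re z - Re w\<bar> \<le> norm (z - w)" using abs_Re_le_cmod[of "z - w"] by simp
      with that show ?thesis by (auto simp: d_def dist_norm)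
    qed
    have sub: "cball z d \<subseteq> {z. 0 < Re z}" using ReW d by fastforce
    define T where "T n = (\<integral>x. indicator {real n<..} x * (exp (- d * x) * \<phi> x) \<partial>lborel)" for n :: nat
    have intd: "integrable lborel (\<lambda>x. exp (- d * x) * \<phi> x)" using ok d unfolding lap_ok_def by auto
    have T0: "T \<longlonglongrightarrow> 0"
    proof -
      have "(\<lambda>n. \<integral>x. indicator {real n<..} x * (exp (- d * x) * \<phi> x) \<partial>lborel) \<longlonglongrightarrow> (\<integral>x. 0 \<partial>(lborel::real measure))"
      proof (rule integral_dominated_convergence[where w = "\<lambda>x. exp (- d * x) * \<phi> x" and
            s = "\<lambda>n x. indicator {real n<..} x * (exp (- d * x) * \<phi> x)" and f = "\<lambda>x. 0"])
        show "integrable lborel (\<lambda>x. exp (- d * x) * \<phi> x)" by (rule intd)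
        show "AE x in lborel. (\<lambda>n. indicator {real n<..} x * (exp (- d * x) * \<phi> x)) \<longlonglongrightarrow> 0"
        proof (rule AE_I2)
          fix x :: real
          obtain N :: nat where "x < real N" using reals_Archimedean2 by blast
          then have "\<forall>\<^sub>F n in sequentially. indicator {real n<..} x * (exp (- d * x) * \<phi> x) = 0"
            by (intro eventually_sequentiallyI[of N]) (auto simp: indicator_def)
          then show "(\<lambda>n. indicator {real n<..} x * (exp (- d * x) * \<phi> x)) \<longlonglongrightarrow> 0"
            by (rule tendsto_eventually)
        qed
        show "AE x in lborel. norm (indicator {real n<..} x * (exp (- d * x) * \<phi> x)) \<le> exp (- d * x) * \<phi> x" for n
          by (auto simp: indicator_def nn abs_mult)
      qed measurable
      then show ?thesis unfolding T_def by simp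
    qed
    have bnd: "norm (LT \<phi> w - fn n w) \<le> T n" if w: "w \<in> cball z d" for w n
    proof -
      have Rw: "Re w > 0" using ReW[OF w] d by simp
      have iF: "integrable lborel (F w)" unfolding F_def by (rule lap_integrable[OF ok Rw])
      have sint: "set_integrable lborel {0..real n} (F w)"
        by (rule borel_integrable_atLeastAtMost') (rule contF)
      have "fn n w = (\<integral>x. indicator {0..real n} x *\<^sub>R F w x \<partial>lborel)"
        unfolding fn_def using set_borel_integral_eq_integral(2)[OF sint] by (simp add: set_lebesgue_integral_def)
      then have "LT \<phi> w - fn n w = (\<integral>x. F w x - indicator {0..real n} x *\<^sub>R F w x \<partial>lborel)"
        unfolding LT_def F_def using iF sint unfolding set_integrable_def F_def
        by (subst Bochner_Integration.integral_diff) auto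
      also have "\<dots> = (\<integral>x. indicator {real n<..} x *\<^sub>R F w x \<partial>lborel)"
        by (rule Bochner_Integration.integral_cong) (auto simp: indicator_def F_def z0)
      finally have eq: "LT \<phi> w - fn n w = (\<integral>x. indicator {real n<..} x *\<^sub>R F w x \<partial>lborel)" .
      have i1: "integrable lborel (\<lambda>x. indicator {real n<..} x * (exp (- d * x) * \<phi> x))"
        using integrable_mult_indicator[OF _ intd, of "{real n<..}"] by simp
      have i2: "integrable lborel (\<lambda>x. indicator {real n<..} x *\<^sub>R F w x)"
        by (rule integrable_mult_indicator[OF _ iF]) simp
      have pw: "norm (indicator {real n<..} x *\<^sub>R F w x) \<le> indicator {real n<..} x * (exp (- d * x) * \<phi> x)" for x
      proof (cases "x > real n")
        case True
        then have "x \<ge> 0" by simp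
        then have "exp (- Re w * x) \<le> exp (- d * x)" using ReW[OF w] by (simp add: mult_right_mono)
        then show ?thesis using True nn[of x] unfolding F_def
          by (auto simp: norm_mult norm_exp_eq_Re indicator_def intro: mult_right_mono)
      qed (simp add: indicator_def)
      have "norm (\<integral>x. indicator {real n<..} x *\<^sub>R F w x \<partial>lborel) \<le> (\<integral>x. norm (indicator {real n<..} x *\<^sub>R F w x) \<partial>lborel)"
        by (rule integral_norm_bound)
      also have "\<dots> \<le> T n"
        unfolding T_def by (rule integral_mono[OF integrable_norm[OF i2] i1 pw])
      finally have "norm (\<integral>x. indicator {real n<..} x *\<^sub>R F w x \<partial>lborel) \<le> T n" .
      then show ?thesis using eq by simp
    qed
    have "uniform_limit (cball z d) fn (LT \<phi>) sequentially"
      unfolding uniform_limit_iff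
    proof (intro allI impI)
      fix e :: real assume "e > 0"
      from T0 \<open>e > 0\<close> have "\<forall>\<^sub>F n in sequentially. T n < e"
        by (auto dest: order_tendstoD)
      then show "\<forall>\<^sub>F n in sequentially. \<forall>w\<in>cball z d. dist (fn n w) (LT \<phi> w) < e"
      proof eventually_elim
        case (elim n)
        show ?case
        proof
          fix w assume "w \<in> cball z d"
          from bnd[OF this, of n] elim show "dist (fn n w) (LT \<phi> w) < e"
            by (simp add: dist_norm norm_minus_commute)
        qed
      qed
    qed
    then show "\<exists>d>0. cball z d \<subseteq> {z. 0 < Re z} \<and> uniform_limit (cball z d) fn (LT \<phi>) sequentially"
      using d sub by blast
  qed
qed


lemma gen1: fixes E :: "real \<Rightarrow> real"
  assumes "(E has_real_derivative - (x + s) * E x) (at x)" "x + s \<noteq> 0"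
  shows "((\<lambda>x. - E x / (x + s)) has_real_derivative E x + E x / (x + s)\<^sup>2) (at x)"
proof -
  have alg: "y \<noteq> 0 \<Longrightarrow> (- (- y * e) * y - - e * 1) / (y * y) = e + e / y\<^sup>2" for y e :: real
    by (simp add: field_simps power2_eq_square)
  have "((\<lambda>x. - E x / (x + s)) has_real_derivative (- (- (x + s) * E x) * (x + s) - - E x * 1) / ((x + s) * (x + s))) (at x)"
    by (rule DERIV_divide) (use assms in \<open>auto intro!: derivative_eq_intros\<close>)
  then show ?thesis using alg[OF assms(2)] by simp
qed
lemma gen2: fixes G :: "real \<Rightarrow> real"
  assumes "(G has_real_derivative - ((x + s) * c) * G x) (at x)" "c \<noteq> 0"
  shows "((\<lambda>x. - G x / c) has_real_derivative (x + s) * G x) (at x)"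
  using assms by (auto intro!: derivative_eq_intros simp: field_simps power2_eq_square)
lemma dE: fixes s x :: real
  shows "((\<lambda>x. exp (- (x\<^sup>2 / 2) - s * x)) has_real_derivative - (x + s) * exp (- (x\<^sup>2 / 2) - s * x)) (at x)"
  by (auto intro!: derivative_eq_intros simp: algebra_simps)
lemma dG: fixes s x c :: real
  shows "((\<lambda>x. exp (- (x\<^sup>2 / 2 + s * x) * c)) has_real_derivative - ((x + s) * c) * exp (- (x\<^sup>2 / 2 + s * x) * c)) (at x)"
  by (auto intro!: derivative_eq_intros simp: algebra_simps)

lemma B1:
  fixes s :: real assumes s: "s > 0"
  shows "(\<integral>\<^sup>+x. ennreal ((x + s) * exp (- (x\<^sup>2 / 2) - s * x)) * indicator {0..} x \<partial>lborel) = 1"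
proof -
  have "(\<integral>\<^sup>+x. ennreal ((x + s) * exp (- (x\<^sup>2 / 2) - s * x)) * indicator {0..} x \<partial>lborel) = 0 - (- exp (- (0\<^sup>2 / 2) - s * 0))"
  proof (rule nn_integral_FTC_atLeast[where F = "\<lambda>x. - exp (- (x\<^sup>2 / 2) - s * x)"])
    fix x :: real assume "0 \<le> x"
    show "((\<lambda>x. - exp (- (x\<^sup>2 / 2) - s * x)) has_real_derivative (x + s) * exp (- (x\<^sup>2 / 2) - s * x)) (at x)"
      by (auto intro!: derivative_eq_intros simp: algebra_simps)
    show "0 \<le> (x + s) * exp (- (x\<^sup>2 / 2) - s * x)" using \<open>0 \<le> x\<close> s by simp
  next
    show "((\<lambda>x. - exp (- (x\<^sup>2 / 2) - s * x)) \<longlongrightarrow> 0) at_top" using s by real_asymp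
  qed measurable
  then show ?thesis by simp
qed

lemma B2:
  fixes s :: real assumes s: "s > 0"
  shows "(\<integral>\<^sup>+x. ennreal (exp (- (x\<^sup>2 / 2) - s * x) + exp (- (x\<^sup>2 / 2) - s * x) / (x + s)\<^sup>2) * indicator {0..} x \<partial>lborel) = ennreal (1 / s)"
proof -
  have "(\<integral>\<^sup>+x. ennreal (exp (- (x\<^sup>2 / 2) - s * x) + exp (- (x\<^sup>2 / 2) - s * x) / (x + s)\<^sup>2) * indicator {0..} x \<partial>lborel) = 0 - (- exp (- (0\<^sup>2 / 2) - s * 0) / (0 + s))"
  proof (rule nn_integral_FTC_atLeast[where F = "\<lambda>x. - exp (- (x\<^sup>2 / 2) - s * x) / (x + s)"])
    fix x :: real assume x: "0 \<le> x"
    show "((\<lambda>x. - exp (- (x\<^sup>2 / 2) - s * x) / (x + s)) has_real_derivative exp (- (x\<^sup>2 / 2) - s * x) + exp (- (x\<^sup>2 / 2) - s * x) / (x + s)\<^sup>2) (at x)"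
      by (rule gen1[OF dE]) (use x s in simp)
    show "0 \<le> exp (- (x\<^sup>2 / 2) - s * x) + exp (- (x\<^sup>2 / 2) - s * x) / (x + s)\<^sup>2" by simp
  next
    show "((\<lambda>x. - exp (- (x\<^sup>2 / 2) - s * x) / (x + s)) \<longlongrightarrow> 0) at_top" using s by real_asymp
  qed measurable
  then show ?thesis using s by simp
qed

lemma B4:
  fixes s u :: real assumes s: "s > 0" and u: "u \<ge> 0"
  shows "(\<integral>\<^sup>+x. ennreal ((x + s) * exp (- (x\<^sup>2 / 2 + s * x) * (2 * u + 1))) * indicator {0..} x \<partial>lborel) = ennreal (1 / (2 * u + 1))"
proof -
  have "(\<integral>\<^sup>+x. ennreal ((x + s) * exp (- (x\<^sup>2 / 2 + s * x) * (2 * u + 1))) * indicator {0..} x \<partial>lborel)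
     = 0 - (- exp (- (0\<^sup>2 / 2 + s * 0) * (2 * u + 1)) / (2 * u + 1))"
  proof (rule nn_integral_FTC_atLeast[where F = "\<lambda>x. - exp (- (x\<^sup>2 / 2 + s * x) * (2 * u + 1)) / (2 * u + 1)"])
    fix x :: real assume x: "0 \<le> x"
    show "((\<lambda>x. - exp (- (x\<^sup>2 / 2 + s * x) * (2 * u + 1)) / (2 * u + 1)) has_real_derivative (x + s) * exp (- (x\<^sup>2 / 2 + s * x) * (2 * u + 1))) (at x)"
      by (rule gen2[OF dG]) (use u in simp)
    show "0 \<le> (x + s) * exp (- (x\<^sup>2 / 2 + s * x) * (2 * u + 1))" using x s by simp
  next
    show "((\<lambda>x. - exp (- (x\<^sup>2 / 2 + s * x) * (2 * u + 1)) / (2 * u + 1)) \<longlongrightarrow> 0) at_top" using s u by real_asymp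
  qed measurable
  then show ?thesis using s by simp
qed

lemma Gamma_three_halves: "Gamma (3/2 :: real) = sqrt pi / 2"
proof -
  have "(1/2::real) \<notin> \<int>\<^sub>\<le>\<^sub>0"
    by (auto elim!: nonpos_Ints_cases)
  then have "Gamma (1/2 + 1 :: real) = 1/2 * Gamma (1/2)" by (rule Gamma_plus1)
  then show ?thesis by (simp add: Gamma_one_half_real)
qed

lemma B3:
  fixes w :: real assumes w: "w > 0"
  shows "(\<integral>\<^sup>+u. ennreal (sqrt u * exp (- w * u)) * indicator {0..} u \<partial>lborel) = ennreal (sqrt pi / 2 / (w * sqrt w))"
proof -
  have G: "((\<lambda>t::real. t powr (3/2 - 1) / exp t) has_integral Gamma (3/2::real)) {0..}"
    by (rule Gamma_integral_real) simp
  have G2: "((\<lambda>t. sqrt t * exp (- t)) has_integral sqrt pi / 2) {0..}"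
  proof -
    have "((\<lambda>t. t powr (3/2 - 1) / exp t) has_integral sqrt pi / 2) {0..}"
      using G by (simp add: Gamma_three_halves)
    then show ?thesis
      by (rule has_integral_eq[rotated]) (simp add: powr_half_sqrt exp_minus field_simps)
  qed
  have N: "(\<integral>\<^sup>+t. ennreal (sqrt t * exp (- t)) * indicator {0..} t \<partial>lborel) = ennreal (sqrt pi / 2)"
    by (rule nn_integral_has_integral_lebesgue'[OF _ G2]) simp
  have "(\<integral>\<^sup>+t. ennreal (sqrt t * exp (- t)) * indicator {0..} t \<partial>lborel)
      = ennreal \<bar>w\<bar> * (\<integral>\<^sup>+u. ennreal (sqrt (0 + w * u) * exp (- (0 + w * u))) * indicator {0..} (0 + w * u) \<partial>lborel)"
    by (rule nn_integral_real_affine) (use w in \<open>auto\<close>)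
  also have "(\<integral>\<^sup>+u. ennreal (sqrt (0 + w * u) * exp (- (0 + w * u))) * indicator {0..} (0 + w * u) \<partial>lborel)
      = (\<integral>\<^sup>+u. ennreal (sqrt w) * (ennreal (sqrt u * exp (- w * u)) * indicator {0..} u) \<partial>lborel)"
  proof (rule nn_integral_cong)
    fix u :: real
    show "ennreal (sqrt (0 + w * u) * exp (- (0 + w * u))) * indicator {0..} (0 + w * u) = ennreal (sqrt w) * (ennreal (sqrt u * exp (- w * u)) * indicator {0..} u)"
    proof (cases "u \<ge> 0")
      case True
      then show ?thesis using w by (simp add: real_sqrt_mult ennreal_mult' indicator_def mult.assoc zero_le_mult_iff)
    next
      case False
      then have "\<not> 0 \<le> w * u" using w by (simp add: zero_le_mult_iff)
      then show ?thesis using False by (simp add: indicator_def)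
    qed
  qed
  also have "\<dots> = ennreal (sqrt w) * (\<integral>\<^sup>+u. ennreal (sqrt u * exp (- w * u)) * indicator {0..} u \<partial>lborel)"
    by (rule nn_integral_cmult) measurable
  finally have eq: "ennreal (sqrt pi / 2) = ennreal (w * sqrt w) * (\<integral>\<^sup>+u. ennreal (sqrt u * exp (- w * u)) * indicator {0..} u \<partial>lborel)"
    using w N by (simp add: ennreal_mult' mult.assoc)
  have "ennreal (1 / (w * sqrt w)) * ennreal (w * sqrt w) = 1"
    using w by (simp flip: ennreal_mult')
  then have "(\<integral>\<^sup>+u. ennreal (sqrt u * exp (- w * u)) * indicator {0..} u \<partial>lborel) = ennreal (1 / (w * sqrt w)) * ennreal (sqrt pi / 2)"
    unfolding eq by (simp flip: mult.assoc)
  also have "\<dots> = ennreal (sqrt pi / 2 / (w * sqrt w))"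
    using w by (simp flip: ennreal_mult')
  finally show ?thesis .
qed

lemma exp_ident: "exp (- (s\<^sup>2) * u) * exp (- (x\<^sup>2 / 2 + s * x) * (2 * u + 1)) = exp (- (x\<^sup>2 / 2) - s * x) * exp (- ((x + s)\<^sup>2) * u)"
  for s u x :: real
  by (simp add: power2_eq_square algebra_simps flip: exp_add)

lemma real_main:
  fixes s :: real assumes s: "s > 0"
  shows "(\<integral>\<^sup>+u. ennreal (exp (- (s\<^sup>2) * u) * nu u) \<partial>lborel)
       = (\<integral>\<^sup>+x. ennreal (exp (- (x\<^sup>2 / 2) - s * x) / (x + s)\<^sup>2) * indicator {0..} x \<partial>lborel)"
proof -
  define K where "K u x = ennreal (2 / sqrt pi * sqrt u * exp (- (s\<^sup>2) * u) * ((x + s) * exp (- (x\<^sup>2 / 2 + s * x) * (2 * u + 1)))) * indicator {0..} x * indicator {0..} u"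
    for u x :: real
  have "(\<integral>\<^sup>+u. ennreal (exp (- (s\<^sup>2) * u) * nu u) \<partial>lborel) = (\<integral>\<^sup>+u. (\<integral>\<^sup>+x. K u x \<partial>lborel) \<partial>lborel)"
  proof (rule nn_integral_cong)
    fix u :: real
    show "ennreal (exp (- (s\<^sup>2) * u) * nu u) = (\<integral>\<^sup>+x. K u x \<partial>lborel)"
    proof (cases "u \<ge> 0")
      case False
      then show ?thesis by (simp add: nu_def K_def)
    next
      case u: True
      have "(\<integral>\<^sup>+x. K u x \<partial>lborel) = (\<integral>\<^sup>+x. ennreal (2 / sqrt pi * sqrt u * exp (- (s\<^sup>2) * u)) * (ennreal ((x + s) * exp (- (x\<^sup>2 / 2 + s * x) * (2 * u + 1))) * indicator {0..} x) \<partial>lborel)"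
      proof (intro nn_integral_cong)
        fix x :: real
        show "K u x = ennreal (2 / sqrt pi * sqrt u * exp (- (s\<^sup>2) * u)) * (ennreal ((x + s) * exp (- (x\<^sup>2 / 2 + s * x) * (2 * u + 1))) * indicator {0..} x)"
        proof (cases "x \<ge> 0")
          case True
          have "ennreal (2 / sqrt pi * sqrt u * exp (- (s\<^sup>2) * u) * ((x + s) * exp (- (x\<^sup>2 / 2 + s * x) * (2 * u + 1))))
             = ennreal (2 / sqrt pi * sqrt u * exp (- (s\<^sup>2) * u)) * ennreal ((x + s) * exp (- (x\<^sup>2 / 2 + s * x) * (2 * u + 1)))"
            by (rule ennreal_mult') (use u in simp)
          then show ?thesis unfolding K_def using u True by (simp add: indicator_def)
        qed (simp add: K_def)
      qed
      also have "\<dots> = ennreal (2 / sqrt pi * sqrt u * exp (- (s\<^sup>2) * u)) * (\<integral>\<^sup>+x. ennreal ((x + s) * exp (- (x\<^sup>2 / 2 + s * x) * (2 * u + 1))) * indicator {0..} x \<partial>lborel)"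
        by (rule nn_integral_cmult) measurable
      also have "\<dots> = ennreal (2 / sqrt pi * sqrt u * exp (- (s\<^sup>2) * u)) * ennreal (1 / (2 * u + 1))"
        unfolding B4[OF s u] ..
      also have "\<dots> = ennreal (exp (- (s\<^sup>2) * u) * nu u)"
        using u by (simp add: nu_def field_simps flip: ennreal_mult')
      finally show ?thesis ..
    qed
  qed
  also have "\<dots> = (\<integral>\<^sup>+x. (\<integral>\<^sup>+u. K u x \<partial>lborel) \<partial>lborel)"
    by (rule lborel_pair.Fubini'[symmetric]) (unfold K_def, measurable)
  also have "\<dots> = (\<integral>\<^sup>+x. ennreal (exp (- (x\<^sup>2 / 2) - s * x) / (x + s)\<^sup>2) * indicator {0..} x \<partial>lborel)"
  proof (rule nn_integral_cong)
    fix x :: real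
    show "(\<integral>\<^sup>+u. K u x \<partial>lborel) = ennreal (exp (- (x\<^sup>2 / 2) - s * x) / (x + s)\<^sup>2) * indicator {0..} x"
    proof (cases "x \<ge> 0")
      case False
      then show ?thesis by (simp add: K_def)
    next
      case x: True
      have xs: "x + s > 0" using x s by simp
      have "(\<integral>\<^sup>+u. K u x \<partial>lborel) = (\<integral>\<^sup>+u. ennreal (2 / sqrt pi * (x + s) * exp (- (x\<^sup>2 / 2) - s * x)) * (ennreal (sqrt u * exp (- ((x + s)\<^sup>2) * u)) * indicator {0..} u) \<partial>lborel)"
      proof (rule nn_integral_cong)
        fix u :: real
        have "2 / sqrt pi * sqrt u * exp (- (s\<^sup>2) * u) * ((x + s) * exp (- (x\<^sup>2 / 2 + s * x) * (2 * u + 1)))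
            = 2 / sqrt pi * (x + s) * sqrt u * (exp (- (s\<^sup>2) * u) * exp (- (x\<^sup>2 / 2 + s * x) * (2 * u + 1)))"
          by (simp only: mult_ac)
        also have "\<dots> = (2 / sqrt pi * (x + s) * exp (- (x\<^sup>2 / 2) - s * x)) * (sqrt u * exp (- ((x + s)\<^sup>2) * u))"
          unfolding exp_ident by (simp only: mult_ac)
        finally have e: "2 / sqrt pi * sqrt u * exp (- (s\<^sup>2) * u) * ((x + s) * exp (- (x\<^sup>2 / 2 + s * x) * (2 * u + 1)))
            = (2 / sqrt pi * (x + s) * exp (- (x\<^sup>2 / 2) - s * x)) * (sqrt u * exp (- ((x + s)\<^sup>2) * u))" .
        show "K u x = ennreal (2 / sqrt pi * (x + s) * exp (- (x\<^sup>2 / 2) - s * x)) * (ennreal (sqrt u * exp (- ((x + s)\<^sup>2) * u)) * indicator {0..} u)"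
        proof (cases "u \<ge> 0")
          case True
          have m: "ennreal ((2 / sqrt pi * (x + s) * exp (- (x\<^sup>2 / 2) - s * x)) * (sqrt u * exp (- ((x + s)\<^sup>2) * u)))
            = ennreal (2 / sqrt pi * (x + s) * exp (- (x\<^sup>2 / 2) - s * x)) * ennreal (sqrt u * exp (- ((x + s)\<^sup>2) * u))"
            by (rule ennreal_mult') (use xs in simp)
          show ?thesis unfolding K_def e m using x True by (simp add: indicator_def)
        qed (simp add: K_def)
      qed
      also have "\<dots> = ennreal (2 / sqrt pi * (x + s) * exp (- (x\<^sup>2 / 2) - s * x)) * (\<integral>\<^sup>+u. ennreal (sqrt u * exp (- ((x + s)\<^sup>2) * u)) * indicator {0..} u \<partial>lborel)"
        by (rule nn_integral_cmult) measurable
      also have "\<dots> = ennreal (2 / sqrt pi * (x + s) * exp (- (x\<^sup>2 / 2) - s * x)) * ennreal (sqrt pi / 2 / ((x + s)\<^sup>2 * sqrt ((x + s)\<^sup>2)))"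
        using B3[of "(x + s)\<^sup>2"] xs by simp
      also have "\<dots> = ennreal (exp (- (x\<^sup>2 / 2) - s * x) / (x + s)\<^sup>2)"
      proof -
        have "2 / sqrt pi * (x + s) * exp (- (x\<^sup>2 / 2) - s * x) * (sqrt pi / 2 / ((x + s)\<^sup>2 * sqrt ((x + s)\<^sup>2)))
            = exp (- (x\<^sup>2 / 2) - s * x) / (x + s)\<^sup>2"
        proof -
          have g: "y > 0 \<Longrightarrow> 2 / sqrt pi * y * E * (sqrt pi / 2 / (y\<^sup>2 * sqrt (y\<^sup>2))) = E / y\<^sup>2" for y E :: real
            by (simp add: field_simps power2_eq_square)
          show ?thesis by (rule g[OF xs])
        qed
        then show ?thesis using xs by (simp flip: ennreal_mult')
      qed
      finally show ?thesis using x by simp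
    qed
  qed
  finally show ?thesis .
qed

definition psi_fn :: "real \<Rightarrow> real" where
  "psi_fn x = (if 0 \<le> x then x * exp (- (x\<^sup>2 / 2)) else 0)"

lemma real_ident:
  fixes s :: real assumes s: "s > 0"
  shows "(\<integral>u. exp (- (s\<^sup>2) * u) * nu u \<partial>lborel) = (\<integral>x. exp (- s * x) * psi_fn x \<partial>lborel) / s"
proof -
  define E where "E x = exp (- (x\<^sup>2 / 2) - s * x)" for x
  define A where "A = (\<integral>\<^sup>+x. ennreal (E x / (x + s)\<^sup>2) * indicator {0..} x \<partial>lborel)"
  define e where "e = (\<integral>\<^sup>+x. ennreal (E x) * indicator {0..} x \<partial>lborel)"
  define B where "B = (\<integral>\<^sup>+x. ennreal (x * E x) * indicator {0..} x \<partial>lborel)"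
  have nun: "0 \<le> nu u" for u by (simp add: nu_def)
  have psin: "0 \<le> psi_fn u" for u by (simp add: psi_fn_def)
  have L: "(\<integral>u. exp (- (s\<^sup>2) * u) * nu u \<partial>lborel) = enn2real A"
  proof -
    have "(\<integral>u. exp (- (s\<^sup>2) * u) * nu u \<partial>lborel) = enn2real (\<integral>\<^sup>+u. ennreal (exp (- (s\<^sup>2) * u) * nu u) \<partial>lborel)"
      by (rule integral_eq_nn_integral) (auto simp: nu_def)
    also have "\<dots> = enn2real A" unfolding A_def E_def real_main[OF s] ..
    finally show ?thesis .
  qed
  have R: "(\<integral>x. exp (- s * x) * psi_fn x \<partial>lborel) = enn2real B"
  proof -
    have "(\<integral>x. exp (- s * x) * psi_fn x \<partial>lborel) = enn2real (\<integral>\<^sup>+x. ennreal (exp (- s * x) * psi_fn x) \<partial>lborel)"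
      by (rule integral_eq_nn_integral) (auto simp: psi_fn_def)
    also have "(\<integral>\<^sup>+x. ennreal (exp (- s * x) * psi_fn x) \<partial>lborel) = B"
      unfolding B_def
    proof (rule nn_integral_cong)
      fix x :: real
      show "ennreal (exp (- s * x) * psi_fn x) = ennreal (x * E x) * indicator {0..} x"
        by (cases "0 \<le> x") (auto simp: psi_fn_def E_def indicator_def algebra_simps simp flip: exp_add)
    qed
    finally show ?thesis .
  qed
  have eA: "e + A = ennreal (1 / s)"
  proof -
    have "e + A = (\<integral>\<^sup>+x. ennreal (E x) * indicator {0..} x + ennreal (E x / (x + s)\<^sup>2) * indicator {0..} x \<partial>lborel)"
      unfolding e_def A_def by (rule nn_integral_add[symmetric]) (auto simp: E_def)
    also have "\<dots> = (\<integral>\<^sup>+x. ennreal (exp (- (x\<^sup>2 / 2) - s * x) + exp (- (x\<^sup>2 / 2) - s * x) / (x + s)\<^sup>2) * indicator {0..} x \<partial>lborel)"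
      by (intro nn_integral_cong) (auto simp: E_def indicator_def)
    also have "\<dots> = ennreal (1 / s)" by (rule B2[OF s])
    finally show ?thesis .
  qed
  have Be: "B + ennreal s * e = 1"
  proof -
    have "B + ennreal s * e = (\<integral>\<^sup>+x. ennreal (x * E x) * indicator {0..} x + ennreal s * (ennreal (E x) * indicator {0..} x) \<partial>lborel)"
      unfolding B_def e_def by (subst nn_integral_add) (auto simp: E_def nn_integral_cmult)
    also have "\<dots> = (\<integral>\<^sup>+x. ennreal ((x + s) * exp (- (x\<^sup>2 / 2) - s * x)) * indicator {0..} x \<partial>lborel)"
    proof (intro nn_integral_cong)
      fix x :: real
      show "ennreal (x * E x) * indicator {0..} x + ennreal s * (ennreal (E x) * indicator {0..} x) = ennreal ((x + s) * exp (- (x\<^sup>2 / 2) - s * x)) * indicator {0..} x"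
      proof (cases "0 \<le> x")
        case True
        have "ennreal ((x + s) * exp (- (x\<^sup>2 / 2) - s * x)) = ennreal (x * E x) + ennreal (s * E x)"
          using True s by (subst ennreal_plus[symmetric]) (auto simp: E_def algebra_simps)
        then show ?thesis using True s by (simp add: indicator_def ennreal_mult')
      qed (simp add: indicator_def)
    qed
    also have "\<dots> = 1" by (rule B1[OF s])
    finally show ?thesis .
  qed
  have le1: "e \<le> e + A" and le2: "A \<le> e + A" and le3: "B \<le> B + ennreal s * e"
    by (simp_all add: le_iff_add)
  have fe: "e < top" using le1 eA by (metis ennreal_less_top le_less_trans)
  have fA: "A < top" using le2 eA by (metis ennreal_less_top le_less_trans)
  have fB: "B < top" using le3 Be by (metis ennreal_one_less_top le_less_trans)
  have "enn2real e + enn2real A = 1 / s"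
  proof -
    have "enn2real (e + A) = 1 / s" using eA s by simp
    then show ?thesis using fe fA by (simp add: enn2real_plus)
  qed
  moreover have "enn2real B + s * enn2real e = 1"
    using arg_cong[OF Be, of enn2real] fB fe s
    by (simp add: enn2real_plus ennreal_mult_less_top enn2real_mult)
  ultimately have "enn2real A = enn2real B / s" using s by (simp add: field_simps)
  then show ?thesis using L R by simp
qed


lemma exp_ind_integrable:
  fixes \<sigma> :: real assumes "\<sigma> > 0"
  shows "integrable lborel (\<lambda>x. exp (- \<sigma> * x) * indicator {0..} x)"
proof (rule integrableI_nonneg)
  have "(\<integral>\<^sup>+x. ennreal (exp (- \<sigma> * x)) * indicator {0..} x \<partial>lborel) = 0 - (- exp (- \<sigma> * 0) / \<sigma>)"
  proof (rule nn_integral_FTC_atLeast[where F = "\<lambda>x. - exp (- \<sigma> * x) / \<sigma>"])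
    fix x :: real assume "0 \<le> x"
    show "((\<lambda>x. - exp (- \<sigma> * x) / \<sigma>) has_real_derivative exp (- \<sigma> * x)) (at x)"
      using assms by (auto intro!: derivative_eq_intros)
  next
    show "((\<lambda>x. - exp (- \<sigma> * x) / \<sigma>) \<longlongrightarrow> 0) at_top" using assms by real_asymp
  qed auto
  moreover have "(\<integral>\<^sup>+x. ennreal (exp (- \<sigma> * x) * indicator {0..} x) \<partial>lborel) = (\<integral>\<^sup>+x. ennreal (exp (- \<sigma> * x)) * indicator {0..} x \<partial>lborel)"
    by (intro nn_integral_cong) (simp add: indicator_def)
  ultimately show "(\<integral>\<^sup>+x. ennreal (exp (- \<sigma> * x) * indicator {0..} x) \<partial>lborel) < \<infinity>"
    by simp
qed auto

lemma lap_ok_bounded: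
  assumes m: "\<phi> \<in> borel_measurable borel" and nn: "\<And>x. 0 \<le> \<phi> x" and z: "\<And>x. x < 0 \<Longrightarrow> \<phi> x = 0"
    and b: "\<And>x. \<phi> x \<le> C"
  shows "lap_ok \<phi>"
  unfolding lap_ok_def
proof (intro conjI allI impI)
  fix \<sigma> :: real assume s: "\<sigma> > 0"
  show "integrable lborel (\<lambda>x. exp (- \<sigma> * x) * \<phi> x)"
  proof (rule Bochner_Integration.integrable_bound)
    show "integrable lborel (\<lambda>x. C * (exp (- \<sigma> * x) * indicator {0..} x))"
      using exp_ind_integrable[OF s] by simp
    show "AE x in lborel. norm (exp (- \<sigma> * x) * \<phi> x) \<le> norm (C * (exp (- \<sigma> * x) * indicator {0..} x))"
    proof (rule AE_I2)
      fix x :: real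
      show "norm (exp (- \<sigma> * x) * \<phi> x) \<le> norm (C * (exp (- \<sigma> * x) * indicator {0..} x))"
      proof (cases "x < 0")
        case True then show ?thesis by (simp add: z)
      next
        case False
        have "0 \<le> C" using nn[of x] b[of x] by simp
        then show ?thesis using False nn[of x] b[of x] by (simp add: abs_mult indicator_def mult.commute)
      qed
    qed
  qed (use m in measurable)
qed (use assms in auto)

lemma nu_alt: "nu x = 2 / sqrt pi * sqrt (max x 0) / (2 * max x 0 + 1)"
  by (simp add: nu_def max_def)

lemma nu_cont: "continuous_on UNIV nu"
proof -
  have "continuous_on UNIV (\<lambda>x. 2 / sqrt pi * sqrt (max x 0) / (2 * max x 0 + 1))"
    by (intro continuous_intros) (auto simp: max_def)
  then show ?thesis by (simp add: nu_alt[abs_def])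
qed

lemma nu_ok: "lap_ok nu"
proof (rule lap_ok_bounded[where C = 2])
  fix x :: real
  show "nu x \<le> 2"
  proof (cases "x \<ge> 0")
    case True
    have pi1: "sqrt pi \<ge> 1" using pi_gt3 by simp
    have "sqrt x \<le> 2 * x + 1"
    proof (cases "x \<le> 1")
      case True then show ?thesis using \<open>x \<ge> 0\<close> by (metis add_increasing mult_nonneg_nonneg real_sqrt_le_1_iff zero_le_numeral)
    next
      case False then show ?thesis using real_sqrt_le_mono[of x "x * x"] by auto
    qed
    then have "sqrt x / (2 * x + 1) \<le> 1" using True by simp
    moreover have "2 / sqrt pi \<le> 2" using pi1 by (simp add: divide_le_eq)
    ultimately have "2 / sqrt pi * (sqrt x / (2 * x + 1)) \<le> 2 * 1"
      by (intro mult_mono) (use True in auto)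
    then show ?thesis using True by (simp add: nu_def)
  qed (simp add: nu_def)
qed (auto simp: nu_def intro: borel_measurable_continuous_onI[OF nu_cont])

lemma psi_alt: "psi_fn x = max x 0 * exp (- ((max x 0)\<^sup>2 / 2))"
  by (simp add: psi_fn_def max_def)

lemma psi_cont: "continuous_on UNIV psi_fn"
proof -
  have "continuous_on UNIV (\<lambda>x::real. max x 0 * exp (- ((max x 0)\<^sup>2 / (2::real))))"
    by (intro continuous_intros) auto
  then show ?thesis by (simp add: psi_alt[abs_def])
qed

lemma psi_ok: "lap_ok psi_fn"
proof (rule lap_ok_bounded[where C = 1])
  fix x :: real
  show "psi_fn x \<le> 1"
  proof (cases "x \<ge> 0")
    case True
    have "x \<le> 1 + x\<^sup>2 / 2" using sum_squares_ge_zero[of "x - 1" 0] by (simp add: power2_eq_square algebra_simps)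
    also have "\<dots> \<le> exp (x\<^sup>2 / 2)" by (rule exp_ge_add_one_self_aux) simp
    finally have "x * exp (- (x\<^sup>2 / 2)) \<le> exp (x\<^sup>2 / 2) * exp (- (x\<^sup>2 / 2))"
      by (intro mult_right_mono) auto
    then show ?thesis using True by (simp add: psi_fn_def flip: exp_add)
  qed (simp add: psi_fn_def)
qed (auto simp: psi_fn_def intro: borel_measurable_continuous_onI[OF psi_cont])

lemma Re_csqrt_pos: assumes "Re z > 0" shows "Re (csqrt z) > 0"
proof (rule ccontr)
  assume "\<not> Re (csqrt z) > 0"
  then have r: "Re (csqrt z) = 0" using Re_csqrt[of z] by simp
  have "z = (csqrt z)\<^sup>2" by simp
  then have "Re z = Re ((csqrt z)\<^sup>2)" by simp
  also have "\<dots> = - (Im (csqrt z))\<^sup>2" using r by (simp add: power2_eq_square)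
  finally show False using assms by (smt (verit) zero_le_power2)
qed

lemma LT_of_real:
  "LT \<phi> (of_real r) = of_real (\<integral>x. exp (- r * x) * \<phi> x \<partial>lborel)"
proof -
  have "LT \<phi> (of_real r) = (\<integral>x. complex_of_real (exp (- r * x) * \<phi> x) \<partial>lborel)"
    unfolding LT_def by (intro Bochner_Integration.integral_cong) (simp_all flip: exp_of_real)
  then show ?thesis by (simp only: integral_complex_of_real)
qed

lemma Psi_LT: assumes s: "Re s > 0" shows "Psi (- s) = LT psi_fn s"
proof -
  define F where "F x = exp (- (s * of_real x)) * of_real (psi_fn x)" for x :: real
  have iF: "integrable lborel F" unfolding F_def by (rule lap_integrable[OF psi_ok s])
  have sint: "set_integrable lborel {0..} F"
    unfolding set_integrable_def using integrable_mult_indicator[OF _ iF, of "{0..}"] by simp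
  have "LT psi_fn s = (LINT x:{0..}|lborel. F x)"
    unfolding LT_def set_lebesgue_integral_def F_def
    by (intro Bochner_Integration.integral_cong) (auto simp: psi_fn_def indicator_def)
  also have "\<dots> = integral {0..} F" by (rule set_borel_integral_eq_integral(2)[OF sint])
  also have "\<dots> = Psi (- s)"
    unfolding Psi_def
  proof (rule integral_cong)
    fix x :: real assume "x \<in> {0..}"
    then show "F x = of_real x * exp (of_real (- (x\<^sup>2) / 2) + - s * of_real x)"
      by (simp add: F_def psi_fn_def exp_of_real[symmetric] mult_exp_exp algebra_simps)
  qed
  finally show ?thesis ..
qed

lemma N1_LT: assumes "Re z > 0" shows "N1 z = LT psi_fn (csqrt z) / csqrt z"
  unfolding N1_def using Psi_LT[OF Re_csqrt_pos[OF assms]] by simp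

lemma N1_holo: "N1 holomorphic_on {z. 0 < Re z}"
proof -
  have h1: "csqrt holomorphic_on {z. 0 < Re z}"
    by (intro holomorphic_intros) (auto simp: nonpos_Reals_def complex_nonpos_Reals_iff)
  have im: "csqrt ` {z. 0 < Re z} \<subseteq> {z. 0 < Re z}" using Re_csqrt_pos by auto
  have h2: "(\<lambda>z. LT psi_fn (csqrt z)) holomorphic_on {z. 0 < Re z}"
    using holomorphic_on_compose_gen[OF h1 LT_holo[OF psi_ok psi_cont] im]
    by (simp add: o_def)
  have "(\<lambda>z. LT psi_fn (csqrt z) / csqrt z) holomorphic_on {z. 0 < Re z}"
    by (intro holomorphic_on_divide h1 h2) auto
  then show ?thesis
    by (rule holomorphic_cong[THEN iffD1, rotated -1]) (auto simp: N1_LT)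
qed

lemma real_case: assumes s: "s > 0" shows "LT nu (of_real (s\<^sup>2)) = N1 (of_real (s\<^sup>2))"
proof -
  have cs: "csqrt (of_real (s\<^sup>2)) = of_real s" using s by (simp add: csqrt_of_real)
  have n: "N1 (of_real (s\<^sup>2)) = LT psi_fn (of_real s) / of_real s"
    using N1_LT[of "of_real (s\<^sup>2)"] s cs by simp
  have a: "LT nu (of_real (s\<^sup>2)) = of_real (\<integral>x. exp (- (s\<^sup>2) * x) * nu x \<partial>lborel)" by (rule LT_of_real)
  have b: "LT psi_fn (of_real s) = of_real (\<integral>x. exp (- s * x) * psi_fn x \<partial>lborel)" by (rule LT_of_real)
  show ?thesis unfolding n a b real_ident[OF s] by simp
qed

lemma base_case: assumes z: "Re z > 0" shows "LT nu z = N1 z"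
proof -
  let ?S = "{z. 0 < Re z}"
  let ?U = "complex_of_real ` {0<..}"
  have "(\<lambda>z. LT nu z - N1 z) z = 0"
  proof (rule analytic_continuation[where f = "\<lambda>z. LT nu z - N1 z" and S = ?S and U = ?U and \<xi> = 1])
    show "(\<lambda>z. LT nu z - N1 z) holomorphic_on ?S"
      by (intro holomorphic_intros LT_holo[OF nu_ok nu_cont] N1_holo)
    show "open ?S" by (rule open_halfspace_Re_gt)
    show "connected ?S" by (rule connected_halfspace_Re_gt)
    show "?U \<subseteq> ?S" by auto
    show "1 \<in> ?S" by simp
    show "z \<in> ?S" using z by simp
    have "\<forall>e>0. \<exists>x'\<in>?U. x' \<noteq> 1 \<and> dist x' 1 < e"
    proof (intro allI impI)
      fix e :: real assume e: "e > 0"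
      have "of_real (1 + e / 2) \<in> ?U" using e by (intro imageI) simp
      moreover have "of_real (1 + e / 2) \<noteq> (1::complex)" using e by (simp add: complex_eq_iff)
      moreover have "dist (of_real (1 + e / 2)) (1::complex) < e" using e by (simp add: dist_norm)
      ultimately show "\<exists>x'\<in>?U. x' \<noteq> 1 \<and> dist x' 1 < e" by blast
    qed
    then show "1 islimpt ?U" unfolding islimpt_approachable .
    fix w assume "w \<in> ?U"
    then obtain r where r: "r > 0" "w = of_real r" by auto
    have "LT nu (of_real ((sqrt r)\<^sup>2)) = N1 (of_real ((sqrt r)\<^sup>2))"
      by (rule real_case) (use r in simp)
    then show "LT nu w - N1 w = 0" using r by simp
  qed
  then show ?thesis by simp
qed

lemma pow_case:
  "lap_ok (nu_conv_pow (Suc m)) \<and> (\<forall>z. Re z > 0 \<longrightarrow> LT (nu_conv_pow (Suc m)) z = N1 z ^ Suc m)"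
proof (induction m)
  case 0
  then show ?case using nu_ok base_case by simp
next
  case (Suc m)
  then have ok: "lap_ok (nu_conv_pow (Suc m))" and eq: "\<And>z. Re z > 0 \<Longrightarrow> LT (nu_conv_pow (Suc m)) z = N1 z ^ Suc m"
    by auto
  show ?case
    using conv_main[OF nu_ok ok] eq base_case by simp
qed

lemma final_integral:
  assumes ok: "lap_ok \<phi>" and z: "Re z > 0"
  shows "((\<lambda>u::real. exp (- (z * of_real u)) * of_real (\<phi> u)) has_integral LT \<phi> z) {0..}"
proof -
  define F where "F u = exp (- (z * of_real u)) * of_real (\<phi> u)" for u :: real
  have iF: "integrable lborel F" unfolding F_def by (rule lap_integrable[OF ok z])
  have sint: "set_integrable lborel {0..} F"
    unfolding set_integrable_def using integrable_mult_indicator[OF _ iF, of "{0..}"] by simp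
  have z0: "\<And>x. x < 0 \<Longrightarrow> \<phi> x = 0" using ok unfolding lap_ok_def by auto
  have "LT \<phi> z = (LINT x:{0..}|lborel. F x)"
    unfolding LT_def set_lebesgue_integral_def F_def
    by (intro Bochner_Integration.integral_cong) (auto simp: indicator_def z0)
  also have "\<dots> = integral {0..} F" by (rule set_borel_integral_eq_integral(2)[OF sint])
  finally have "LT \<phi> z = integral {0..} F" .
  moreover have "F integrable_on {0..}" by (rule set_borel_integral_eq_integral(1)[OF sint])
  ultimately show ?thesis unfolding F_def[abs_def] by (simp add: integrable_integral)
qed

theorem propositionA1:
  fixes n :: nat and z :: complex
  assumes "Re z > 0"
  shows "(n = 0 \<longrightarrow> N1 z ^ n = 1) \<and>
         (n \<ge> 1 \<longrightarrow>
            ((\<lambda>u::real. exp (- (z * of_real u)) * of_real (nu_conv_pow n u))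
               has_integral N1 z ^ n) {0..})"
proof (intro conjI impI)
  show "n = 0 \<Longrightarrow> N1 z ^ n = 1" by simp
  assume "n \<ge> 1"
  then obtain m where n: "n = Suc m" by (cases n) auto
  show "((\<lambda>u::real. exp (- (z * of_real u)) * of_real (nu_conv_pow n u)) has_integral N1 z ^ n) {0..}"
    using final_integral[of "nu_conv_pow n" z] pow_case[of m] assms unfolding n by simp
qed

end
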